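(* Let $K$ be a field of characteristic $\neq2$ and $\tau=(1,-1,-1,-1)$. Then $\mathrm{Aut}\,A_\tau=G_5$, where $G_5=\{(\alpha_1x_1,\beta_2x_2)\mid \alpha_1,\beta_2\in K^*\}$ is the group of toric automorphisms of $K\langle x_1,x_2\rangle$.
   Context: $A=K\langle x_1,x_2\rangle$ is the free associative algebra with unit on $x_1,x_2$; $\varphi=(f_1,f_2)$ denotes the algebra endomorphism with $\varphi(x_1)=f_1$, $\varphi(x_2)=f_2$. For $q_{ij}\in K$, the diagonal braiding $\tau=(q_{11},q_{12},q_{21},q_{22})$ on $A$ is the linear map $A\otimes A\to A\otimes A$ given on words $u,v$ by $(u\otimes v)\tau=q_{11}^{s_1t_1}q_{12}^{s_1t_2}q_{21}^{s_2t_1}q_{22}^{s_2t_2}\,(v\otimes u)$, where $s_i$ (resp. $t_i$) is the number of occurrences of $x_i$ in $u$ (resp. $v$). $A_\tau$ is $A$ equipped with $\tau$, and $\mathrm{Aut}\,A_\tau$ is the group of algebra automorphisms $\varphi$ of $A$ satisfying $(\varphi\otimes\varphi)((w)\tau)=((\varphi\otimes\varphi)(w))\tau$ for all $w\in A\otimes A$, viewed as a subgroup of $\mathrm{Aut}\,K\langle x_1,x_2\rangle$. *)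

theory Defs
  imports Main
begin

text \<open>The free associative unital algebra K<x1,x2>: elements are finitely supported
  coefficient functions on words over the two letters.\<close>

datatype var = X1 | X2

type_synonym word = "var list"
type_synonym 'k fa = "word \<Rightarrow> 'k"
type_synonym 'k fa2 = "word \<times> word \<Rightarrow> 'k"

definition FA :: "('k::zero) fa set" where
  "FA = {p. finite {w. p w \<noteq> 0}}"

definition FA2 :: "('k::zero) fa2 set" where
  "FA2 = {t. finite {uv. t uv \<noteq> 0}}"

definition fa_one :: "('k::{zero,one}) fa" where
  "fa_one = (\<lambda>w. if w = [] then 1 else 0)"

definition fa_var :: "var \<Rightarrow> ('k::{zero,one}) fa" where
  "fa_var a = (\<lambda>w. if w = [a] then 1 else 0)"

definition fa_smult :: "'k::times \<Rightarrow> 'k fa \<Rightarrow> 'k fa" where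
  "fa_smult c p = (\<lambda>w. c * p w)"

definition fa_mult :: "('k::comm_semiring_1) fa \<Rightarrow> 'k fa \<Rightarrow> 'k fa" where
  "fa_mult p q = (\<lambda>w. \<Sum>(u, v) \<in> {(u, v). u @ v = w}. p u * q v)"

definition word_img :: "(var \<Rightarrow> ('k::comm_semiring_1) fa) \<Rightarrow> word \<Rightarrow> 'k fa" where
  "word_img f w = foldr (\<lambda>a acc. fa_mult (f a) acc) w fa_one"

definition endo :: "(var \<Rightarrow> ('k::comm_semiring_1) fa) \<Rightarrow> 'k fa \<Rightarrow> 'k fa" where
  "endo f p = (\<lambda>z. \<Sum>w \<in> {w. p w \<noteq> 0}. p w * word_img f w z)"

text \<open>phi tensor phi on A tensor A\<close>
definition endo2 :: "(var \<Rightarrow> ('k::comm_semiring_1) fa) \<Rightarrow> 'k fa2 \<Rightarrow> 'k fa2" where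
  "endo2 f t = (\<lambda>(a, b). \<Sum>(u, v) \<in> {uv. t uv \<noteq> 0}.
       t (u, v) * word_img f u a * word_img f v b)"

definition cnt :: "var \<Rightarrow> word \<Rightarrow> nat" where
  "cnt i w = length (filter (\<lambda>a. a = i) w)"

text \<open>braiding coefficient for (u tensor v) tau = coef q u v (v tensor u)\<close>
definition braid_coef :: "(var \<Rightarrow> var \<Rightarrow> 'k::comm_monoid_mult) \<Rightarrow> word \<Rightarrow> word \<Rightarrow> 'k" where
  "braid_coef q u v = q X1 X1 ^ (cnt X1 u * cnt X1 v) * q X1 X2 ^ (cnt X1 u * cnt X2 v)
     * q X2 X1 ^ (cnt X2 u * cnt X1 v) * q X2 X2 ^ (cnt X2 u * cnt X2 v)"

definition braid :: "(var \<Rightarrow> var \<Rightarrow> 'k::comm_semiring_1) \<Rightarrow> 'k fa2 \<Rightarrow> 'k fa2" where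
  "braid q t = (\<lambda>(a, b). braid_coef q b a * t (b, a))"

definition is_aut :: "(var \<Rightarrow> ('k::comm_semiring_1) fa) \<Rightarrow> bool" where
  "is_aut f \<longleftrightarrow> f X1 \<in> FA \<and> f X2 \<in> FA \<and> bij_betw (endo f) FA FA"

definition Aut_braided :: "(var \<Rightarrow> var \<Rightarrow> 'k::comm_semiring_1) \<Rightarrow> ('k fa \<times> 'k fa) set" where
  "Aut_braided q = {(f1, f2). is_aut (case_var f1 f2) \<and>
     (\<forall>t \<in> FA2. endo2 (case_var f1 f2) (braid q t) = braid q (endo2 (case_var f1 f2) t))}"

definition tau5 :: "var \<Rightarrow> var \<Rightarrow> 'k::comm_ring_1" where
  "tau5 i j = (if i = X1 \<and> j = X1 then 1 else -1)"

definition G5 :: "('k::field fa \<times> 'k fa) set" where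
  "G5 = {(fa_smult \<alpha> (fa_var X1), fa_smult \<beta> (fa_var X2)) | \<alpha> \<beta>. \<alpha> \<noteq> 0 \<and> \<beta> \<noteq> 0}"

end

theory Submission
  imports Defs
begin


fun digit :: "var \<Rightarrow> nat" where "digit X1 = 1" | "digit X2 = 2"

definition enc :: "word \<Rightarrow> nat" where
  "enc w = foldl (\<lambda>acc a. 3*acc + digit a) 0 w"

lemma foldl_enc: "foldl (\<lambda>acc a. 3*acc + digit a) acc v = acc * 3^length v + foldl (\<lambda>acc a. 3*acc + digit a) 0 v"
proof (induction v arbitrary: acc)
  case Nil then show ?case by simp
next
  case (Cons x xs)
  let ?g = "\<lambda>acc a. 3*acc + digit a"
  have a: "foldl ?g acc (x#xs) = (3*acc+digit x)*3^length xs + foldl ?g 0 xs"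
    using Cons.IH[of "3*acc+digit x"] by simp
  have b: "foldl ?g 0 (x#xs) = digit x * 3^length xs + foldl ?g 0 xs"
    using Cons.IH[of "digit x"] by simp
  show ?case unfolding a b by (simp add: algebra_simps)
qed

lemma enc_append: "enc (u @ v) = enc u * 3 ^ length v + enc v"
  unfolding enc_def foldl_append by (subst foldl_enc) (rule refl)

lemma enc_snoc: "enc (w @ [a]) = 3 * enc w + digit a"
  unfolding enc_def by simp

lemma digit_pos: "1 \<le> digit a \<and> digit a \<le> 2" by (cases a) auto

lemma enc_Nil[simp]: "enc [] = 0" by (simp add: enc_def)

lemma enc_inj: "enc u = enc v \<Longrightarrow> u = v"
proof (induction u arbitrary: v rule: rev_induct)
  case Nil
  then show ?case
  proof (cases v rule: rev_exhaust)
    case (snoc ys y) then show ?thesis using Nil digit_pos[of y] by (simp add: enc_snoc)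
  qed simp
next
  case (snoc a u)
  show ?case
  proof (cases v rule: rev_exhaust)
    case Nil then show ?thesis using snoc.prems digit_pos[of a] by (simp add: enc_snoc)
  next
    case (snoc v' b)
    have e: "3 * enc u + digit a = 3 * enc v' + digit b"
      using snoc.prems \<open>v = v' @ [b]\<close> by (simp add: enc_snoc)
    have "digit a = digit b" using e digit_pos[of a] digit_pos[of b] by presburger
    then have "a = b" by (cases a; cases b) auto
    moreover have "enc u = enc v'" using e \<open>digit a = digit b\<close> by simp
    ultimately show ?thesis using snoc.IH \<open>v = v' @ [b]\<close> by simp
  qed
qed

lemma enc_bounds: "enc w < 3 ^ length w \<and> 3 ^ length w \<le> 2 * enc w + 1"
proof (induction w rule: rev_induct)
  case Nil then show ?case by simp
next
  case (snoc a w) then show ?case using digit_pos[of a] by (simp add: enc_snoc)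
qed

lemma enc_length: "length v < length u \<Longrightarrow> enc v < enc u"
proof -
  assume "length v < length u"
  then have "(3::nat) ^ Suc (length v) \<le> 3 ^ length u"
    by (intro power_increasing) auto
  then have "3 * 3 ^ length v \<le> (3::nat) ^ length u" by simp
  then show ?thesis using enc_bounds[of v] enc_bounds[of u] by linarith
qed

lemma enc_le_length: "enc v \<le> enc u \<Longrightarrow> length v \<le> length u"
  using enc_length by (meson leD leI)

lemma enc_mono_left: "enc u \<le> enc u' \<Longrightarrow> enc (u @ v) \<le> enc (u' @ v)"
  by (simp add: enc_append)

lemma enc_strict_left: "enc u < enc u' \<Longrightarrow> enc (u @ v) < enc (u' @ v)"
  by (simp add: enc_append)

lemma enc_mono_right: "enc v \<le> enc v' \<Longrightarrow> enc (u @ v) \<le> enc (u @ v')"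
proof -
  assume a: "enc v \<le> enc v'"
  then have "length v \<le> length v'" by (rule enc_le_length)
  then have "(3::nat) ^ length v \<le> 3 ^ length v'" by (simp add: power_increasing)
  then have "enc u * 3 ^ length v \<le> enc u * 3 ^ length v'" by simp
  then show ?thesis using a unfolding enc_append by linarith
qed

lemma enc_le2: "enc u \<le> 2 \<Longrightarrow> u = [] \<or> u = [X1] \<or> u = [X2]"
proof (cases "length u \<ge> 2")
  case True
  then have "(3::nat)^2 \<le> 3 ^ length u" by (intro power_increasing) auto
  then have False if "enc u \<le> 2" using enc_bounds[of u] that by simp
  then show "enc u \<le> 2 \<Longrightarrow> ?thesis" by blast
next
  case False
  then consider "u = []" | a where "u = [a]"
    by (cases u; cases "tl u") auto
  then show ?thesis by cases (auto, (case_tac a; simp))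
qed



abbreviation cc :: "(var \<Rightarrow> word) \<Rightarrow> var list \<Rightarrow> word" where
  "cc L ws \<equiv> concat (map L ws)"

abbreviation pw :: "word \<Rightarrow> nat \<Rightarrow> word" where
  "pw z i \<equiv> concat (replicate i z)"

lemma first_letter:
  assumes "cc L ws = cc L ws'" "ws \<noteq> ws'"
  shows "L X1 = [] \<or> L X2 = [] \<or> (\<exists>xs ys. L X1 @ xs = L X2 @ ys)"
  using assms
proof (induction ws arbitrary: ws')
  case Nil
  then obtain b ys where "ws' = b # ys" by (cases ws') auto
  then have "L b = []" using Nil by simp
  then show ?case by (cases b) auto
next
  case (Cons a xs)
  show ?case
  proof (cases ws')
    case Nil
    then have "L a = []" using Cons by simp
    then show ?thesis by (cases a) auto
  next
    case (Cons b ys)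
    show ?thesis
    proof (cases "a = b")
      case True
      then have "cc L xs = cc L ys" "xs \<noteq> ys" using Cons Cons.prems by auto
      then show ?thesis using Cons.IH by blast
    next
      case False
      have e: "L a @ cc L xs = L b @ cc L ys" using Cons Cons.prems by simp
      show ?thesis
      proof (cases a)
        case X1 then have "b = X2" using False by (cases b) auto
        then show ?thesis using e X1 by blast
      next
        case X2 then have "b = X1" using False by (cases b) auto
        then show ?thesis using e X2 by metis
      qed
    qed
  qed
qed

definition sig1 :: "var \<Rightarrow> var list" where "sig1 = case_var [X1] [X1, X2]"
definition sig2 :: "var \<Rightarrow> var list" where "sig2 = case_var [X2, X1] [X2]"

lemma sig1_hd: "cc sig1 xs \<noteq> X2 # r"
  by (cases xs) (auto simp: sig1_def split: var.splits)

lemma sig2_hd: "cc sig2 xs \<noteq> X1 # r"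
  by (cases xs) (auto simp: sig2_def split: var.splits)

lemma sig1_inj: "cc sig1 ws = cc sig1 ws' \<Longrightarrow> ws = ws'"
proof (induction ws arbitrary: ws')
  case Nil then show ?case by (cases ws') (auto simp: sig1_def split: var.splits)
next
  case (Cons a xs)
  then obtain b ys where ws': "ws' = b # ys"
    by (cases ws') (auto simp: sig1_def split: var.splits)
  show ?case
  proof (cases a; cases b)
    assume "a = X1" "b = X2"
    then show ?thesis using Cons.prems ws' sig1_hd[of xs "cc sig1 ys"] by (simp add: sig1_def)
  next
    assume "a = X2" "b = X1"
    then show ?thesis using Cons.prems ws' sig1_hd[of ys "cc sig1 xs"] by (simp add: sig1_def)
  qed (use Cons ws' in \<open>auto simp: sig1_def\<close>)
qed

lemma sig2_inj: "cc sig2 ws = cc sig2 ws' \<Longrightarrow> ws = ws'"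
proof (induction ws arbitrary: ws')
  case Nil then show ?case by (cases ws') (auto simp: sig2_def split: var.splits)
next
  case (Cons a xs)
  then obtain b ys where ws': "ws' = b # ys"
    by (cases ws') (auto simp: sig2_def split: var.splits)
  show ?case
  proof (cases a; cases b)
    assume "a = X1" "b = X2"
    then show ?thesis using Cons.prems ws' sig2_hd[of ys "cc sig2 xs"] by (simp add: sig2_def)
  next
    assume "a = X2" "b = X1"
    then show ?thesis using Cons.prems ws' sig2_hd[of xs "cc sig2 ys"] by (simp add: sig2_def)
  qed (use Cons ws' in \<open>auto simp: sig2_def\<close>)
qed

lemma code_main:
  "cc L ws = cc L ws' \<Longrightarrow> ws \<noteq> ws' \<Longrightarrow>
     (\<exists>z i j. L X1 = pw z i \<and> L X2 = pw z j)"
proof (induction "length (L X1) + length (L X2)" arbitrary: L ws ws' rule: less_induct)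
  case less
  note eq = less.prems(1) and ne = less.prems(2)
  show "\<exists>z i j. L X1 = pw z i \<and> L X2 = pw z j"
  proof (cases "L X1 = []")
    case True then show ?thesis by (rule_tac x="L X2" in exI, rule_tac x=0 in exI, rule_tac x=1 in exI) simp
  next
    case n1: False
    show ?thesis
    proof (cases "L X2 = []")
      case True then show ?thesis by (rule_tac x="L X1" in exI, rule_tac x=1 in exI, rule_tac x=0 in exI) simp
    next
      case n2: False
      obtain xs ys where e: "L X1 @ xs = L X2 @ ys" using first_letter[OF eq ne] n1 n2 by blast
      then obtain us where "(L X1 = L X2 @ us) \<or> (L X1 @ us = L X2)"
        by (auto simp: append_eq_append_conv2)
      then show ?thesis
      proof
        assume h: "L X1 @ us = L X2"
        define L' where "L' = case_var (L X1) us"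
        have cL: "cc L w = cc L' (cc sig1 w)" for w
          by (induction w) (auto simp: L'_def sig1_def h[symmetric] split: var.splits)
        have "cc L' (cc sig1 ws) = cc L' (cc sig1 ws')" using eq cL by metis
        moreover have "cc sig1 ws \<noteq> cc sig1 ws'" using ne sig1_inj by blast
        moreover have "length (L' X1) + length (L' X2) < length (L X1) + length (L X2)"
          using n1 h[symmetric] by (simp add: L'_def)
        ultimately obtain z i j where "L' X1 = pw z i" "L' X2 = pw z j"
          using less.hyps by blast
        then have "L X1 = pw z i" "L X2 = pw z (i + j)"
          using h[symmetric] by (auto simp: L'_def replicate_add)
        then show ?thesis by blast
      next
        assume h: "L X1 = L X2 @ us"
        define L' where "L' = case_var us (L X2)"
        have cL: "cc L w = cc L' (cc sig2 w)" for w
          by (induction w) (auto simp: L'_def sig2_def h split: var.splits)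
        have "cc L' (cc sig2 ws) = cc L' (cc sig2 ws')" using eq cL by metis
        moreover have "cc sig2 ws \<noteq> cc sig2 ws'" using ne sig2_inj by blast
        moreover have "length (L' X1) + length (L' X2) < length (L X1) + length (L X2)"
          using n2 h by (simp add: L'_def)
        ultimately obtain z i j where "L' X1 = pw z i" "L' X2 = pw z j"
          using less.hyps by blast
        then have "L X1 = pw z (j + i)" "L X2 = pw z j"
          using h by (auto simp: L'_def replicate_add)
        then show ?thesis by blast
      qed
    qed
  qed
qed

lemma cnt_append[simp]: "cnt a (u @ v) = cnt a u + cnt a v"
  by (simp add: cnt_def)

lemma cnt_pw: "cnt a (pw z i) = i * cnt a z"
  by (induction i) (auto simp: cnt_def)



definition is_lm :: "('k::zero) fa \<Rightarrow> word \<Rightarrow> bool" where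
  "is_lm p L \<longleftrightarrow> p L \<noteq> 0 \<and> (\<forall>u. p u \<noteq> 0 \<longrightarrow> enc u \<le> enc L)"

lemma is_lm_unique: "is_lm p A \<Longrightarrow> is_lm p B \<Longrightarrow> A = B"
  unfolding is_lm_def by (meson enc_inj order_antisym)

lemma split_set_eq: "{(u, v). u @ v = w} = (\<lambda>i. (take i w, drop i w)) ` {0..length w}"
proof safe
  fix u v assume "w = u @ v"
  then show "(u, v) \<in> (\<lambda>i. (take i (u @ v), drop i (u @ v))) ` {0..length (u @ v)}"
    by (rule_tac x="length u" in image_eqI) auto
qed auto

lemma finite_split: "finite {(u, v). u @ v = w}"
  by (simp add: split_set_eq)

lemma lm_exists:
  assumes "p \<in> FA" "p \<noteq> (\<lambda>_. 0)"
  shows "\<exists>L. is_lm p L"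
proof -
  let ?S = "{w. p w \<noteq> 0}"
  have fin: "finite (enc ` ?S)" using assms(1) by (simp add: FA_def)
  have ne: "enc ` ?S \<noteq> {}" using assms(2) by auto
  obtain L where L: "L \<in> ?S" "enc L = Max (enc ` ?S)" using Max_in[OF fin ne] by auto
  have "\<forall>u. p u \<noteq> 0 \<longrightarrow> enc u \<le> enc L" using Max_ge[OF fin] L by auto
  then show ?thesis using L unfolding is_lm_def by auto
qed

lemma mult_lm:
  fixes p q :: "'k::field fa"
  assumes p: "is_lm p Lp" and q: "is_lm q Lq"
  shows "is_lm (fa_mult p q) (Lp @ Lq)"
proof -
  let ?S = "{(u, v). u @ v = Lp @ Lq}"
  have z: "p u * q v = 0" if "(u, v) \<in> ?S - {(Lp, Lq)}" for u v
  proof (rule ccontr)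
    assume nz: "p u * q v \<noteq> 0"
    then have a: "enc u \<le> enc Lp" "enc v \<le> enc Lq" using p q unfolding is_lm_def by auto
    have uv: "u @ v = Lp @ Lq" using that by auto
    show False
    proof (cases "u = Lp")
      case True then show False using that uv by auto
    next
      case False
      then have "enc u < enc Lp" using a enc_inj by (meson le_neq_implies_less)
      then have "enc (u @ v) < enc (Lp @ v)" by (rule enc_strict_left)
      also have "\<dots> \<le> enc (Lp @ Lq)" using a(2) by (rule enc_mono_right)
      finally show False using uv by simp
    qed
  qed
  have "fa_mult p q (Lp @ Lq) = (\<Sum>(u, v) \<in> ?S. p u * q v)" by (simp add: fa_mult_def)
  also have "\<dots> = p Lp * q Lq + (\<Sum>(u, v) \<in> ?S - {(Lp, Lq)}. p u * q v)"
    by (subst sum.remove[OF finite_split, of "(Lp, Lq)"]) auto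
  also have "(\<Sum>(u, v) \<in> ?S - {(Lp, Lq)}. p u * q v) = 0"
    by (rule sum.neutral) (use z in fastforce)
  finally have val: "fa_mult p q (Lp @ Lq) = p Lp * q Lq" by simp
  have bound: "enc w \<le> enc (Lp @ Lq)" if "fa_mult p q w \<noteq> 0" for w
  proof -
    from that obtain u v where uv: "u @ v = w" "p u * q v \<noteq> 0"
      unfolding fa_mult_def by (auto elim: sum.not_neutral_contains_not_neutral)
    then have a: "enc u \<le> enc Lp" "enc v \<le> enc Lq" using p q unfolding is_lm_def by auto
    have "enc (u @ v) \<le> enc (Lp @ v)" using a(1) by (rule enc_mono_left)
    also have "\<dots> \<le> enc (Lp @ Lq)" using a(2) by (rule enc_mono_right)
    finally show ?thesis using uv by simp
  qed
  show ?thesis using val bound p q unfolding is_lm_def by auto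
qed

lemma is_lm_one: "is_lm (fa_one :: 'k::field fa) []"
  unfolding is_lm_def fa_one_def by auto

lemma word_img_Cons: "word_img f (a # w) = fa_mult (f a) (word_img f w)"
  by (simp add: word_img_def)

lemma word_img_Nil: "word_img f [] = fa_one"
  by (simp add: word_img_def)

lemma word_img_lm:
  fixes f :: "var \<Rightarrow> 'k::field fa"
  assumes "\<And>a. is_lm (f a) (L a)"
  shows "is_lm (word_img f w) (cc L w)"
  by (induction w) (auto simp: word_img_Cons word_img_Nil is_lm_one intro!: mult_lm assms)

lemma endo_lm:
  fixes f :: "var \<Rightarrow> 'k::field fa"
  assumes pFA: "p \<in> FA" and pnz: "p \<noteq> (\<lambda>_. 0)" and lmf: "\<And>a. is_lm (f a) (L a)"
    and inj: "inj_on (cc L) {w. p w \<noteq> 0}"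
  shows "\<exists>w. p w \<noteq> 0 \<and> is_lm (endo f p) (cc L w)"
proof -
  let ?S = "{w. p w \<noteq> 0}"
  have finS: "finite ?S" using pFA by (simp add: FA_def)
  have fin: "finite ((\<lambda>w. enc (cc L w)) ` ?S)" using finS by simp
  have ne: "(\<lambda>w. enc (cc L w)) ` ?S \<noteq> {}" using pnz by auto
  obtain w0 where w0: "w0 \<in> ?S" "enc (cc L w0) = Max ((\<lambda>w. enc (cc L w)) ` ?S)"
    using Max_in[OF fin ne] by auto
  have ge: "enc (cc L w) \<le> enc (cc L w0)" if "w \<in> ?S" for w
    using Max_ge[OF fin] that w0 by auto
  have wi: "is_lm (word_img f w) (cc L w)" for w by (rule word_img_lm[OF lmf])
  have z: "p w * word_img f w (cc L w0) = 0" if "w \<in> ?S - {w0}" for w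
  proof (rule ccontr)
    assume "p w * word_img f w (cc L w0) \<noteq> 0"
    then have "enc (cc L w0) \<le> enc (cc L w)" using wi[of w] unfolding is_lm_def by auto
    then have "enc (cc L w0) = enc (cc L w)" using ge that by (meson DiffD1 order_antisym)
    then have "cc L w0 = cc L w" by (rule enc_inj)
    then have "w0 = w" using inj w0(1) that by (auto dest: inj_onD)
    then show False using that by auto
  qed
  have "endo f p (cc L w0) = (\<Sum>w \<in> ?S. p w * word_img f w (cc L w0))" by (simp add: endo_def)
  also have "\<dots> = p w0 * word_img f w0 (cc L w0) + (\<Sum>w \<in> ?S - {w0}. p w * word_img f w (cc L w0))"
    by (subst sum.remove[OF finS w0(1)]) auto
  also have "(\<Sum>w \<in> ?S - {w0}. p w * word_img f w (cc L w0)) = 0"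
    by (rule sum.neutral) (use z in auto)
  finally have val: "endo f p (cc L w0) \<noteq> 0" using w0(1) wi[of w0] unfolding is_lm_def by simp
  have bound: "enc z \<le> enc (cc L w0)" if "endo f p z \<noteq> 0" for z
  proof -
    from that obtain w where w: "w \<in> ?S" "p w * word_img f w z \<noteq> 0"
      unfolding endo_def by (auto elim: sum.not_neutral_contains_not_neutral)
    then have "enc z \<le> enc (cc L w)" using wi[of w] unfolding is_lm_def by auto
    then show ?thesis using ge[OF w(1)] by linarith
  qed
  show ?thesis using val bound w0(1) unfolding is_lm_def by auto
qed



lemma fa_mult_one: "fa_mult p (fa_one :: 'k::field fa) = p"
proof
  fix w
  have "fa_mult p fa_one w = (\<Sum>x \<in> {(u, v). u @ v = w}. if x = (w, []) then p w else 0)"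
    unfolding fa_mult_def fa_one_def by (rule sum.cong) (auto split: if_splits)
  also have "\<dots> = p w" by (subst sum.delta[OF finite_split]) auto
  finally show "fa_mult p fa_one w = p w" .
qed

lemma word_img_single: "word_img f [a] = (f a :: 'k::field fa)"
  by (simp add: word_img_Cons word_img_Nil fa_mult_one)

lemma endo_var: "endo f (fa_var a) = (f a :: 'k::field fa)"
proof
  fix z
  have s: "{w. (fa_var a :: 'k fa) w \<noteq> 0} = {[a]}" by (auto simp: fa_var_def)
  show "endo f (fa_var a) z = f a z"
    unfolding endo_def s by (simp add: fa_var_def word_img_single)
qed

lemma endo_zero: "endo f (\<lambda>_. 0) = (\<lambda>_. (0::'k::field))"
  by (simp add: endo_def)

lemma fa_var_FA: "fa_var a \<in> (FA :: 'k::field fa set)"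
proof -
  have "{w. (fa_var a :: 'k fa) w \<noteq> 0} = {[a]}" by (auto simp: fa_var_def)
  then show ?thesis by (simp add: FA_def)
qed

lemma zero_FA: "(\<lambda>_. 0) \<in> (FA :: 'k::field fa set)"
  by (simp add: FA_def)

lemma fa_var_nz: "fa_var a \<noteq> (\<lambda>_. (0::'k::field))"
  by (metis fa_var_def one_neq_zero)

definition dl :: "'k::zero \<Rightarrow> word \<times> word \<Rightarrow> 'k fa2" where
  "dl c x = (\<lambda>y. if y = x then c else 0)"

lemma dl_FA2: "dl c x \<in> FA2"
proof -
  have "{uv. dl c x uv \<noteq> 0} \<subseteq> {x}" by (auto simp: dl_def)
  then show ?thesis unfolding FA2_def by (auto intro: finite_subset)
qed

lemma endo2_dl:
  fixes c :: "'k::field"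
  shows "endo2 f (dl c (u0, v0)) (a, b) = c * word_img f u0 a * word_img f v0 b"
proof (cases "c = 0")
  case True then show ?thesis by (simp add: endo2_def dl_def)
next
  case False
  then have "{uv. dl c (u0, v0) uv \<noteq> 0} = {(u0, v0)}" by (auto simp: dl_def)
  then show ?thesis by (simp add: endo2_def dl_def)
qed

lemma braid_dl: "braid q (dl c (u0, v0)) = dl (braid_coef q u0 v0 * c) (v0, u0)"
  by (auto simp: braid_def dl_def fun_eq_iff)

lemma braid_extract:
  fixes f :: "var \<Rightarrow> 'k::field fa"
  assumes "endo2 f (braid q (dl 1 (u0, v0))) = braid q (endo2 f (dl 1 (u0, v0)))"
  shows "braid_coef q u0 v0 * word_img f v0 a * word_img f u0 b
       = braid_coef q b a * word_img f u0 b * word_img f v0 a"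
proof -
  have "endo2 f (braid q (dl 1 (u0, v0))) (a, b) = braid q (endo2 f (dl 1 (u0, v0))) (a, b)"
    using assms by simp
  then show ?thesis by (simp only: braid_dl endo2_dl) (simp add: braid_def endo2_dl)
qed

lemma coef_tau5: "braid_coef (tau5 :: var \<Rightarrow> var \<Rightarrow> 'k::field) u v
   = (-1) ^ (cnt X1 u * cnt X2 v + cnt X2 u * cnt X1 v + cnt X2 u * cnt X2 v)"
  by (simp add: braid_coef_def tau5_def power_add)

lemma cnt_single: "cnt X1 [X1] = 1" "cnt X2 [X1] = 0" "cnt X1 [X2] = 0" "cnt X2 [X2] = 1"
  by (auto simp: cnt_def)

lemma neg1_pow: "(1::'k::field) \<noteq> -1 \<Longrightarrow> ((-1::'k) ^ n = 1 \<longleftrightarrow> even n) \<and> ((-1::'k) ^ n = -1 \<longleftrightarrow> odd n)"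
  by (cases "even n") (auto simp: neg_one_even_power neg_one_odd_power)



definition mon :: "'k::zero \<Rightarrow> word \<Rightarrow> 'k fa" where
  "mon c u = (\<lambda>z. if z = u then c else 0)"

lemma mon_mult: "fa_mult (mon c u) (mon d v) = mon (c * d) (u @ v :: word)" for c d :: "'k::field"
proof
  fix w
  have "fa_mult (mon c u) (mon d v) w = (\<Sum>x \<in> {(x, y). x @ y = w}. if x = (u, v) then c * d else 0)"
    unfolding fa_mult_def mon_def by (rule sum.cong) (auto split: if_splits)
  also have "\<dots> = mon (c * d) (u @ v) w" by (subst sum.delta[OF finite_split]) (auto simp: mon_def)
  finally show "fa_mult (mon c u) (mon d v) w = mon (c * d) (u @ v) w" .
qed

definition sc :: "'k::field \<Rightarrow> 'k \<Rightarrow> word \<Rightarrow> 'k" where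
  "sc \<alpha> \<beta> w = \<alpha> ^ cnt X1 w * \<beta> ^ cnt X2 w"

abbreviation tor :: "'k::field \<Rightarrow> 'k \<Rightarrow> var \<Rightarrow> 'k fa" where
  "tor \<alpha> \<beta> \<equiv> case_var (fa_smult \<alpha> (fa_var X1)) (fa_smult \<beta> (fa_var X2))"

lemma tor_mon: "tor \<alpha> \<beta> a = mon (sc \<alpha> \<beta> [a]) [a]"
  by (cases a) (auto simp: mon_def sc_def fa_smult_def fa_var_def cnt_def fun_eq_iff)

lemma sc_Cons: "sc \<alpha> \<beta> (a # w) = sc \<alpha> \<beta> [a] * sc \<alpha> \<beta> w"
  by (cases a) (auto simp: sc_def cnt_def)

lemma word_img_tor: "word_img (tor \<alpha> \<beta>) w = mon (sc \<alpha> \<beta> w) w"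
proof (induction w)
  case Nil then show ?case by (simp add: word_img_Nil fa_one_def mon_def sc_def cnt_def)
next
  case (Cons a w)
  then show ?case by (simp add: word_img_Cons tor_mon mon_mult sc_Cons[of _ _ a w])
qed

lemma endo_tor:
  assumes "p \<in> FA"
  shows "endo (tor \<alpha> \<beta>) p = (\<lambda>z. sc \<alpha> \<beta> z * p z)"
proof
  fix z
  have fin: "finite {w. p w \<noteq> 0}" using assms by (simp add: FA_def)
  have "endo (tor \<alpha> \<beta>) p z = (\<Sum>w \<in> {w. p w \<noteq> 0}. if w = z then p z * sc \<alpha> \<beta> z else 0)"
    unfolding endo_def word_img_tor mon_def by (rule sum.cong) auto
  also have "\<dots> = sc \<alpha> \<beta> z * p z" by (subst sum.delta[OF fin]) auto
  finally show "endo (tor \<alpha> \<beta>) p z = sc \<alpha> \<beta> z * p z" .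
qed

lemma sc_nz: "\<alpha> \<noteq> 0 \<Longrightarrow> \<beta> \<noteq> 0 \<Longrightarrow> sc \<alpha> \<beta> z \<noteq> 0"
  by (simp add: sc_def)

lemma endo2_tor:
  assumes "t \<in> FA2"
  shows "endo2 (tor \<alpha> \<beta>) t (a, b) = sc \<alpha> \<beta> a * sc \<alpha> \<beta> b * t (a, b)"
proof -
  have fin: "finite {uv. t uv \<noteq> 0}" using assms by (simp add: FA2_def)
  have "endo2 (tor \<alpha> \<beta>) t (a, b) = (\<Sum>x \<in> {uv. t uv \<noteq> 0}. if x = (a, b) then t (a, b) * sc \<alpha> \<beta> a * sc \<alpha> \<beta> b else 0)"
    unfolding endo2_def word_img_tor mon_def by (simp, rule sum.cong) (auto split: if_splits)
  also have "\<dots> = sc \<alpha> \<beta> a * sc \<alpha> \<beta> b * t (a, b)" by (subst sum.delta[OF fin]) auto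
  finally show ?thesis .
qed

lemma braid_FA2: "t \<in> FA2 \<Longrightarrow> braid q t \<in> FA2"
proof -
  assume "t \<in> FA2"
  then have fin: "finite {uv. t uv \<noteq> 0}" by (simp add: FA2_def)
  have "{uv. braid q t uv \<noteq> 0} \<subseteq> (\<lambda>(a, b). (b, a)) ` {uv. t uv \<noteq> 0}"
    by (auto simp: braid_def image_iff)
  then show ?thesis unfolding FA2_def using fin by (auto intro: finite_subset)
qed

lemma G5_sub:
  assumes "\<alpha> \<noteq> 0" "\<beta> \<noteq> 0"
  shows "(fa_smult \<alpha> (fa_var X1), fa_smult \<beta> (fa_var X2)) \<in> Aut_braided (q :: var \<Rightarrow> var \<Rightarrow> 'k::field)"
proof -
  have fin1: "fa_smult c (fa_var a) \<in> (FA :: 'k fa set)" for c a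
  proof -
    have "{w. fa_smult c (fa_var a :: 'k fa) w \<noteq> 0} \<subseteq> {[a]}" by (auto simp: fa_smult_def fa_var_def)
    then show ?thesis unfolding FA_def by (auto intro: finite_subset)
  qed
  have inFA: "(\<lambda>z. y z / sc \<alpha> \<beta> z) \<in> FA" if "y \<in> FA" for y
    using that by (auto simp: FA_def sc_nz[OF assms])
  have inFA2: "(\<lambda>z. sc \<alpha> \<beta> z * y z) \<in> FA" if "y \<in> FA" for y
    using that by (auto simp: FA_def sc_nz[OF assms])
  have bij: "bij_betw (endo (tor \<alpha> \<beta>)) FA FA"
  proof (rule bij_betw_byWitness[where f' = "\<lambda>p z. p z / sc \<alpha> \<beta> z"])
    show "endo (tor \<alpha> \<beta>) ` FA \<subseteq> FA"
      using inFA2 by (auto simp: endo_tor)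
    show "(\<lambda>p z. p z / sc \<alpha> \<beta> z) ` FA \<subseteq> FA"
      using inFA by auto
    show "\<forall>x \<in> FA. (\<lambda>z. endo (tor \<alpha> \<beta>) x z / sc \<alpha> \<beta> z) = x"
      by (auto simp: endo_tor sc_nz[OF assms])
    show "\<forall>y \<in> FA. endo (tor \<alpha> \<beta>) (\<lambda>z. y z / sc \<alpha> \<beta> z) = y"
      using inFA by (auto simp: endo_tor sc_nz[OF assms])
  qed
  have br: "endo2 (tor \<alpha> \<beta>) (braid q t) = braid q (endo2 (tor \<alpha> \<beta>) t)" if "t \<in> FA2" for t
  proof
    fix x :: "word \<times> word"
    obtain a b where x: "x = (a, b)" by (cases x)
    have "endo2 (tor \<alpha> \<beta>) (braid q t) (a, b) = sc \<alpha> \<beta> a * sc \<alpha> \<beta> b * braid q t (a, b)"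
      by (rule endo2_tor[OF braid_FA2[OF that]])
    then show "endo2 (tor \<alpha> \<beta>) (braid q t) x = braid q (endo2 (tor \<alpha> \<beta>) t) x"
      unfolding x by (simp add: braid_def endo2_tor[OF that] mult_ac)
  qed
  show ?thesis unfolding Aut_braided_def is_aut_def using fin1 bij br by auto
qed



lemma single_prefix: "x \<noteq> [] \<Longrightarrow> x @ r = [c] \<Longrightarrow> x = [c]"
  by (cases x) auto

lemma Aut_sub:
  assumes two: "(2::'k::field) \<noteq> 0"
    and mem: "(f1, f2) \<in> Aut_braided (tau5 :: var \<Rightarrow> var \<Rightarrow> 'k)"
  shows "(f1, f2) \<in> G5"
proof -
  define f where "f = case_var f1 f2"
  have one: "(1::'k) \<noteq> -1"
  proof
    assume "(1::'k) = -1"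
    then have "(2::'k) = 1 + -1" by (metis one_add_one)
    then show False using two by simp
  qed
  have aut: "is_aut f" and brd: "\<And>t. t \<in> FA2 \<Longrightarrow> endo2 f (braid tau5 t) = braid tau5 (endo2 f t)"
    using mem unfolding Aut_braided_def f_def by auto
  have fFA: "f a \<in> FA" for a using aut unfolding is_aut_def by (cases a) auto
  have bij: "bij_betw (endo f) FA FA" using aut unfolding is_aut_def by auto
  have fnz: "f a \<noteq> (\<lambda>_. 0)" for a
  proof
    assume "f a = (\<lambda>_. 0)"
    then have "endo f (fa_var a) = endo f (\<lambda>_. 0)" by (simp add: endo_var endo_zero)
    then have "fa_var a = (\<lambda>_. (0::'k))"
      using bij_betw_imp_inj_on[OF bij] fa_var_FA zero_FA by (metis inj_onD)
    then show False using fa_var_nz by blast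
  qed
  have key: "braid_coef tau5 [i] [j] = braid_coef (tau5 :: var \<Rightarrow> var \<Rightarrow> 'k) b a"
    if "f j a \<noteq> 0" "f i b \<noteq> 0" for i j a b
  proof -
    have "braid_coef tau5 [i] [j] * f j a * f i b = braid_coef tau5 b a * f i b * f j a"
      using braid_extract[OF brd[OF dl_FA2], of "[i]" "[j]" a b] by (simp add: word_img_single)
    then show ?thesis using that by (simp add: mult.assoc mult.left_commute[of _ "f i b"])
  qed
  define N where "N b a = cnt X1 b * cnt X2 a + cnt X2 b * cnt X1 a + cnt X2 b * cnt X2 a" for b a
  have coef: "braid_coef (tau5 :: var \<Rightarrow> var \<Rightarrow> 'k) b a = (-1) ^ N b a" for b a
    by (simp add: coef_tau5 N_def)
  have c11: "braid_coef (tau5 :: var \<Rightarrow> var \<Rightarrow> 'k) [X1] [X1] = 1"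
    and c12: "braid_coef (tau5 :: var \<Rightarrow> var \<Rightarrow> 'k) [X1] [X2] = -1"
    and c22: "braid_coef (tau5 :: var \<Rightarrow> var \<Rightarrow> 'k) [X2] [X2] = -1"
    by (simp_all add: coef N_def cnt_single)
  have par1: "even (cnt X2 b)" if "f1 b \<noteq> 0" for b
  proof -
    have "(-1::'k) ^ N b b = 1" using key[of X1 b X1 b] that c11 coef by (simp add: f_def)
    then have "even (N b b)" using neg1_pow[OF one] by blast
    moreover have "N b b = 2 * (cnt X1 b * cnt X2 b) + cnt X2 b * cnt X2 b"
      by (simp add: N_def mult.commute)
    ultimately show ?thesis by simp
  qed
  have par2: "odd (cnt X2 a)" if "f2 a \<noteq> 0" for a
  proof -
    have "(-1::'k) ^ N a a = -1" using key[of X2 a X2 a] that c22 coef by (simp add: f_def)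
    then have "odd (N a a)" using neg1_pow[OF one] by blast
    moreover have "N a a = 2 * (cnt X1 a * cnt X2 a) + cnt X2 a * cnt X2 a"
      by (simp add: N_def mult.commute)
    ultimately show ?thesis by simp
  qed
  obtain a0 where a0: "f2 a0 \<noteq> 0" using fnz[of X2] by (auto simp: f_def)
  have par3: "odd (cnt X1 b)" if "f1 b \<noteq> 0" for b
  proof -
    have "(-1::'k) ^ N b a0 = -1" using key[of X2 a0 X1 b] that a0 c12 coef by (simp add: f_def)
    then have "odd (N b a0)" using neg1_pow[OF one] by blast
    then show ?thesis using par1[OF that] par2[OF a0] by (simp add: N_def)
  qed
  obtain L1 where L1: "is_lm f1 L1" using lm_exists[OF fFA[of X1] fnz[of X1]] by (auto simp: f_def)
  obtain L2 where L2: "is_lm f2 L2" using lm_exists[OF fFA[of X2] fnz[of X2]] by (auto simp: f_def)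
  define L where "L = case_var L1 L2"
  have lmf: "is_lm (f a) (L a)" for a using L1 L2 by (cases a) (auto simp: f_def L_def)
  have pL1: "odd (cnt X1 L1)" "even (cnt X2 L1)" using L1 par1 par3 unfolding is_lm_def by auto
  have pL2: "odd (cnt X2 L2)" using L2 par2 unfolding is_lm_def by auto
  have inj: "inj (cc L)"
  proof (rule injI, rule ccontr)
    fix ws ws' assume "cc L ws = cc L ws'" "ws \<noteq> ws'"
    then obtain z i j where "L X1 = pw z i" "L X2 = pw z j" using code_main by blast
    then have "cnt X1 L1 = i * cnt X1 z" "cnt X2 L1 = i * cnt X2 z" "cnt X2 L2 = j * cnt X2 z"
      by (auto simp: L_def cnt_pw)
    then show False using pL1 pL2 by auto
  qed
  have Lne: "L a \<noteq> []" for a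
    using pL1 pL2 by (cases a) (auto simp: L_def cnt_def)
  have reach: "L c = [c]" for c
  proof -
    have "fa_var c \<in> endo f ` FA" using bij_betw_imp_surj_on[OF bij] fa_var_FA by simp
    then obtain p where p2: "fa_var c = endo f p" and p1: "p \<in> FA" by (rule imageE)
    have p: "p \<in> FA" "endo f p = fa_var c" using p1 p2 by simp_all
    have pnz: "p \<noteq> (\<lambda>_. 0)"
    proof
      assume "p = (\<lambda>_. 0)"
      then have "fa_var c = endo f (\<lambda>_. 0)" using p2 by simp
      then have "fa_var c = (\<lambda>_. (0::'k))" by (simp only: endo_zero)
      then show False by (rule notE[OF fa_var_nz])
    qed
    obtain w where w: "is_lm (endo f p) (cc L w)"
      using endo_lm[OF p(1) pnz lmf inj_on_subset[OF inj subset_UNIV]] by blast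
    have w2: "is_lm (fa_var c :: 'k fa) (cc L w)" using w p(2) by simp
    have "is_lm (fa_var c :: 'k fa) [c]" unfolding is_lm_def fa_var_def by auto
    then have e: "cc L w = [c]" using is_lm_unique[OF w2] by blast
    then obtain a w' where "w = a # w'" by (cases w) auto
    then have "L a @ cc L w' = [c]" using e by simp
    then have La: "L a = [c]" by (rule single_prefix[OF Lne])
    show ?thesis
    proof (cases "a = c")
      case True then show ?thesis using La by simp
    next
      case False
      then show ?thesis using La pL1 pL2 by (cases a; cases c) (auto simp: L_def cnt_def)
    qed
  qed
  have e1: "L1 = [X1]" and e2: "L2 = [X2]" using reach[of X1] reach[of X2] by (auto simp: L_def)
  have f1eq: "f1 = fa_smult (f1 [X1]) (fa_var X1)"
  proof
    fix u show "f1 u = fa_smult (f1 [X1]) (fa_var X1) u"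
    proof (cases "f1 u = 0")
      case False
      then have "enc u \<le> 2" using L1 e1 unfolding is_lm_def by (fastforce simp: enc_def)
      then have "u = [X1]" using enc_le2[of u] par3[OF False] by (auto simp: cnt_def)
      then show ?thesis by (simp add: fa_smult_def fa_var_def)
    next
      case True
      then have "u \<noteq> [X1]" using L1 e1 unfolding is_lm_def by auto
      then show ?thesis using True by (simp add: fa_smult_def fa_var_def)
    qed
  qed
  have f2eq: "f2 = fa_smult (f2 [X2]) (fa_var X2)"
  proof
    fix u show "f2 u = fa_smult (f2 [X2]) (fa_var X2) u"
    proof (cases "f2 u = 0")
      case False
      then have "enc u \<le> 2" using L2 e2 unfolding is_lm_def by (fastforce simp: enc_def)
      then have "u = [X2]" using enc_le2[of u] par2[OF False] by (auto simp: cnt_def)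
      then show ?thesis by (simp add: fa_smult_def fa_var_def)
    next
      case True
      then have "u \<noteq> [X2]" using L2 e2 unfolding is_lm_def by auto
      then show ?thesis using True by (simp add: fa_smult_def fa_var_def)
    qed
  qed
  have "f1 [X1] \<noteq> 0" "f2 [X2] \<noteq> 0" using L1 L2 e1 e2 unfolding is_lm_def by auto
  then show ?thesis unfolding G5_def using f1eq f2eq by blast
qed

theorem lemma9:
  assumes "(2::'k::field) \<noteq> 0"
  shows "Aut_braided (tau5 :: var \<Rightarrow> var \<Rightarrow> 'k) = G5"
proof
  show "Aut_braided tau5 \<subseteq> (G5 :: ('k fa \<times> 'k fa) set)"
    using Aut_sub[OF assms] by auto
  show "(G5 :: ('k fa \<times> 'k fa) set) \<subseteq> Aut_braided tau5"
    unfolding G5_def using G5_sub by blast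
qed

end
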